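(* Let $X$ be a complex base norm space with base $K$, equipped with its canonical base norm $|||\cdot|||$. Then the closed unit ball $\{u \in X : |||u||| \le 1\}$ equals the norm closure of the absolute convex hull of $K$, i.e. the closure of the set of all sums $\sum_{k=1}^n \alpha_k \varphi_k$ with $n\in\mathbb{N}$, $\varphi_k \in K$, $\alpha_k \in \mathbb{C}$ and $\sum_k |\alpha_k| \le 1$.
   Context: A real ordered vector space is a real vector space $Y$ with a proper cone $Y_+$ ($Y_+\cap(-Y_+)=\{0\}$). A base for $Y_+$ is a convex set $K\subseteq Y_+$ such that every nonzero $x \in Y_+$ can be written as $x = tk$ for a unique $t>0$ and unique $k\in K$. $Y$ is a real pre-base norm space if $Y_+$ has a base $K$, $Y = Y_+ - Y_+$, and $C={\rm co}(K\cup(-K))$ is linearly bounded (for each nonzero $x\in C$ there is $n\in\mathbb{N}$ with $nx\notin C$); its base norm is the Minkowski functional of $C$. A real base norm space is a real pre-base norm space whose cone $Y_+$ is closed in the base norm (and normed by the base norm). A complex $*$-vector space is a complex vector space with a conjugate-linear involution; $X_{\rm sa}$ denotes its selfadjoint elements. A complex base norm space is a complex $*$-vector space $X$ with a cone $X_+\subseteq X_{\rm sa}$ such that $(X_{\rm sa},X_+)$ is a real base norm space with base $K$, equipped with the canonical base norm $|||u||| = \inf \sum_{k=1}^n |\alpha_k|$, the infimum over all ways of writing $u=\sum_{k=1}^n \alpha_k \varphi_k$ with $\varphi_k\in K$, $\alpha_k\in\mathbb{C}$. *)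

theory Defs
  imports "HOL-Analysis.Analysis"
begin

text \<open>A complex vector space is encoded as a real vector space together with a
  real-linear map J (multiplication by the imaginary unit) with J (J x) = - x.\<close>

definition complex_structure :: "('a::real_vector \<Rightarrow> 'a) \<Rightarrow> bool" where
  "complex_structure J \<longleftrightarrow> linear J \<and> (\<forall>x. J (J x) = - x)"

definition cscale :: "('a::real_vector \<Rightarrow> 'a) \<Rightarrow> complex \<Rightarrow> 'a \<Rightarrow> 'a" where
  "cscale J c x = Re c *\<^sub>R x + Im c *\<^sub>R J x"

definition star_involution :: "('a::real_vector \<Rightarrow> 'a) \<Rightarrow> ('a \<Rightarrow> 'a) \<Rightarrow> bool" where
  "star_involution J st \<longleftrightarrow>
     (\<forall>x. st (st x) = x) \<and> (\<forall>x y. st (x + y) = st x + st y) \<and>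
     (\<forall>c x. st (cscale J c x) = cscale J (cnj c) (st x))"

definition selfadjoint :: "('a \<Rightarrow> 'a) \<Rightarrow> 'a set" where
  "selfadjoint st = {x. st x = x}"

definition proper_cone :: "'a::real_vector set \<Rightarrow> bool" where
  "proper_cone P \<longleftrightarrow> 0 \<in> P \<and> (\<forall>p\<in>P. \<forall>q\<in>P. p + q \<in> P) \<and>
     (\<forall>p\<in>P. \<forall>t::real. t \<ge> 0 \<longrightarrow> t *\<^sub>R p \<in> P) \<and> P \<inter> uminus ` P = {0}"

definition is_base :: "'a::real_vector set \<Rightarrow> 'a set \<Rightarrow> bool" where
  "is_base P K \<longleftrightarrow> convex K \<and> K \<subseteq> P \<and>
     (\<forall>x\<in>P. x \<noteq> 0 \<longrightarrow> (\<exists>!(t, k). t > (0::real) \<and> k \<in> K \<and> x = t *\<^sub>R k))"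

definition linearly_bounded :: "'a::real_vector set \<Rightarrow> bool" where
  "linearly_bounded C \<longleftrightarrow> (\<forall>x\<in>C. x \<noteq> 0 \<longrightarrow> (\<exists>n::nat. real n *\<^sub>R x \<notin> C))"

definition minkowski :: "'a::real_vector set \<Rightarrow> 'a \<Rightarrow> real" where
  "minkowski C x = Inf {t. t > 0 \<and> x \<in> (\<lambda>y. t *\<^sub>R y) ` C}"

definition base_set :: "'a::real_vector set \<Rightarrow> 'a set" where
  "base_set K = convex hull (K \<union> uminus ` K)"

definition real_base_norm_space :: "'a::real_vector set \<Rightarrow> 'a set \<Rightarrow> 'a set \<Rightarrow> bool" where
  "real_base_norm_space Y P K \<longleftrightarrow>
     P \<subseteq> Y \<and> proper_cone P \<and> is_base P K \<and> Y = {p - q | p q. p \<in> P \<and> q \<in> P} \<and>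
     linearly_bounded (base_set K) \<and>
     (\<forall>x\<in>Y. (\<forall>e>0. \<exists>p\<in>P. minkowski (base_set K) (x - p) < e) \<longrightarrow> x \<in> P)"

definition complex_base_norm_space ::
  "('a::real_vector \<Rightarrow> 'a) \<Rightarrow> ('a \<Rightarrow> 'a) \<Rightarrow> 'a set \<Rightarrow> 'a set \<Rightarrow> bool" where
  "complex_base_norm_space J st P K \<longleftrightarrow>
     complex_structure J \<and> star_involution J st \<and>
     real_base_norm_space (selfadjoint st) P K"

definition cbnorm :: "('a::real_vector \<Rightarrow> 'a) \<Rightarrow> 'a set \<Rightarrow> 'a \<Rightarrow> real" where
  "cbnorm J K u = Inf {(\<Sum>i<n. cmod (\<alpha> i)) | (n::nat) \<alpha> \<phi>.
      (\<forall>i<n. \<phi> i \<in> K) \<and> u = (\<Sum>i<n. cscale J (\<alpha> i) (\<phi> i))}"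

definition abs_convex_hull :: "('a::real_vector \<Rightarrow> 'a) \<Rightarrow> 'a set \<Rightarrow> 'a set" where
  "abs_convex_hull J K = {(\<Sum>i<n. cscale J (\<alpha> i) (\<phi> i)) | (n::nat) \<alpha> \<phi>.
      (\<forall>i<n. \<phi> i \<in> K) \<and> (\<Sum>i<n. cmod (\<alpha> i)) \<le> 1}"

definition cbn_closure :: "('a::real_vector \<Rightarrow> 'a) \<Rightarrow> 'a set \<Rightarrow> 'a set \<Rightarrow> 'a set" where
  "cbn_closure J K S = {u. \<forall>e>0. \<exists>v\<in>S. cbnorm J K (u - v) < e}"

end

theory Submission
  imports Defs
begin

definition repr :: "('a::real_vector \<Rightarrow> 'a) \<Rightarrow> 'a set \<Rightarrow> 'a \<Rightarrow> real \<Rightarrow> bool" where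
  "repr J K u s \<longleftrightarrow> (\<exists>(n::nat) \<alpha> \<phi>. (\<forall>i<n. \<phi> i \<in> K) \<and> u = (\<Sum>i<n. cscale J (\<alpha> i) (\<phi> i))
     \<and> s = (\<Sum>i<n. cmod (\<alpha> i)))"

lemma cbnorm_repr: "cbnorm J K u = Inf {s. repr J K u s}"
  unfolding cbnorm_def repr_def by (rule arg_cong[where f=Inf]) blast

lemma repr_nonneg: "repr J K u s \<Longrightarrow> s \<ge> 0"
  unfolding repr_def by (auto intro: sum_nonneg)

lemma sum_split_add: "(\<Sum>i<n+m. f i) = (\<Sum>i<n. f i) + (\<Sum>i<m. f (n+i))"
  for f :: "nat \<Rightarrow> 'b::comm_monoid_add"
  by (induction m) (auto simp: add.assoc)

lemma repr_add:
  assumes "repr J K u s" "repr J K v t"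
  shows "repr J K (u+v) (s+t)"
proof -
  obtain n :: nat and \<alpha> \<phi> where a: "\<forall>i<n. \<phi> i \<in> K" "u = (\<Sum>i<n. cscale J (\<alpha> i) (\<phi> i))" "s = (\<Sum>i<n. cmod (\<alpha> i))"
    using assms(1) unfolding repr_def by auto
  obtain m :: nat and \<beta> \<psi> where b: "\<forall>i<m. \<psi> i \<in> K" "v = (\<Sum>i<m. cscale J (\<beta> i) (\<psi> i))" "t = (\<Sum>i<m. cmod (\<beta> i))"
    using assms(2) unfolding repr_def by auto
  define \<alpha>' where "\<alpha>' i = (if i < n then \<alpha> i else \<beta> (i - n))" for i
  define \<phi>' where "\<phi>' i = (if i < n then \<phi> i else \<psi> (i - n))" for i
  have 1: "\<forall>i<n+m. \<phi>' i \<in> K" using a b unfolding \<phi>'_def by auto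
  have 2: "u + v = (\<Sum>i<n+m. cscale J (\<alpha>' i) (\<phi>' i))"
  proof -
    have "(\<Sum>i<n+m. cscale J (\<alpha>' i) (\<phi>' i)) = (\<Sum>i<n. cscale J (\<alpha>' i) (\<phi>' i)) + (\<Sum>i<m. cscale J (\<alpha>' (n+i)) (\<phi>' (n+i)))"
      by (rule sum_split_add)
    also have "(\<Sum>i<n. cscale J (\<alpha>' i) (\<phi>' i)) = u" unfolding a(2) \<alpha>'_def \<phi>'_def by (intro sum.cong) auto
    also have "(\<Sum>i<m. cscale J (\<alpha>' (n+i)) (\<phi>' (n+i))) = v" unfolding b(2) \<alpha>'_def \<phi>'_def by (intro sum.cong) auto
    finally show ?thesis by simp
  qed
  have 3: "s + t = (\<Sum>i<n+m. cmod (\<alpha>' i))"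
  proof -
    have "(\<Sum>i<n+m. cmod (\<alpha>' i)) = (\<Sum>i<n. cmod (\<alpha>' i)) + (\<Sum>i<m. cmod (\<alpha>' (n+i)))"
      by (rule sum_split_add)
    also have "(\<Sum>i<n. cmod (\<alpha>' i)) = s" unfolding a(3) \<alpha>'_def by (intro sum.cong) auto
    also have "(\<Sum>i<m. cmod (\<alpha>' (n+i))) = t" unfolding b(3) \<alpha>'_def by (intro sum.cong) auto
    finally show ?thesis by simp
  qed
  show ?thesis unfolding repr_def using 1 2 3 by blast
qed

lemma repr_scale:
  assumes "repr J K u s" "r \<ge> 0"
  shows "repr J K (r *\<^sub>R u) (r * s)"
proof -
  obtain n :: nat and \<alpha> \<phi> where a: "\<forall>i<n. \<phi> i \<in> K" "u = (\<Sum>i<n. cscale J (\<alpha> i) (\<phi> i))" "s = (\<Sum>i<n. cmod (\<alpha> i))"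
    using assms(1) unfolding repr_def by auto
  have e1: "r *\<^sub>R cscale J c x = cscale J (of_real r * c) x" for c x
    by (simp add: cscale_def scaleR_add_right)
  have e2: "r * cmod c = cmod (of_real r * c)" for c
    using assms(2) by (simp add: norm_mult)
  have "r *\<^sub>R u = (\<Sum>i<n. cscale J (of_real r * \<alpha> i) (\<phi> i))"
    unfolding a(2) scaleR_sum_right e1 ..
  moreover have "r * s = (\<Sum>i<n. cmod (of_real r * \<alpha> i))"
    unfolding a(3) sum_distrib_left e2 ..
  ultimately show ?thesis using a(1) unfolding repr_def
    by (intro exI[of _ n] exI[of _ "\<lambda>i. of_real r * \<alpha> i"] exI[of _ \<phi>]) simp
qed

lemma repr_all:
  assumes "complex_base_norm_space J st P K"
  shows "\<exists>s. repr J K u s"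
proof -
  have cs: "linear J" "\<And>x. J (J x) = - x" and si: "star_involution J st"
    and rb: "real_base_norm_space (selfadjoint st) P K"
    using assms unfolding complex_base_norm_space_def complex_structure_def by auto
  have J0: "J 0 = 0" using cs(1) by (simp add: linear_0)
  have Jscale: "J (r *\<^sub>R x) = r *\<^sub>R J x" for r x using cs(1) by (simp add: linear_scale)
  have Jadd: "J (x + y) = J x + J y" for x y using cs(1) by (simp add: linear_add)
  have Jdiff: "J (x - y) = J x - J y" for x y using cs(1) by (simp add: linear_diff)
  have stadd: "st (x + y) = st x + st y" for x y using si unfolding star_involution_def by blast
  have stc: "st (cscale J c x) = cscale J (cnj c) (st x)" for c x using si unfolding star_involution_def by blast
  have stscale: "st (r *\<^sub>R x) = r *\<^sub>R st x" for r x
    using stc[of "of_real r" x] by (simp add: cscale_def)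
  have stJ: "st (J x) = - J (st x)" for x
    using stc[of "\<i>" x] by (simp add: cscale_def)
  have stdiff: "st (x - y) = st x - st y" for x y
    using stadd[of "x - y" y] by (simp add: algebra_simps)
  have baseP: "is_base P K"
    using rb unfolding real_base_norm_space_def by (elim conjE) assumption
  have Y: "selfadjoint st = {p - q | p q. p \<in> P \<and> q \<in> P}"
    using rb unfolding real_base_norm_space_def by (elim conjE) assumption
  have rP: "repr J K (cscale J c x) (cmod c * t)" if xP0: "x \<in> P" and hk: "\<exists>k. x = t *\<^sub>R k \<and> k \<in> K \<and> t \<ge> 0" for x c t
  proof -
    obtain k where k: "x = t *\<^sub>R k" "k \<in> K" "t \<ge> 0" using hk by blast
    have "cscale J c x = (\<Sum>i<Suc 0. cscale J ((\<lambda>_. c * of_real t) i) ((\<lambda>_. k) i))"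
      using k by (simp add: cscale_def Jscale)
    moreover have "cmod c * t = (\<Sum>i<Suc 0. cmod ((\<lambda>_. c * of_real t) i))"
      using k by (simp add: norm_mult)
    ultimately show ?thesis unfolding repr_def using k
      by (intro exI[of _ "Suc 0"] exI[of _ "\<lambda>_. c * of_real t"] exI[of _ "\<lambda>_. k"]) simp
  qed
  have rP': "\<exists>s. repr J K (cscale J c x) s" if xP: "x \<in> P" for x c
  proof (cases "x = 0")
    case True
    have "cscale J c x = (\<Sum>i<(0::nat). cscale J ((\<lambda>_. c) i) ((\<lambda>_. x) i))"
      using True J0 by (simp add: cscale_def)
    then have "repr J K (cscale J c x) 0" unfolding repr_def
      by (intro exI[of _ "0::nat"] exI[of _ "\<lambda>_. c"] exI[of _ "\<lambda>_. x"]) simp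
    then show ?thesis by blast
  next
    case False
    have "\<exists>!(t, k). t > (0::real) \<and> k \<in> K \<and> x = t *\<^sub>R k"
      using baseP xP False unfolding is_base_def by blast
    then have "\<exists>tk. (case tk of (t, k) \<Rightarrow> t > (0::real) \<and> k \<in> K \<and> x = t *\<^sub>R k)"
      by (rule ex1_implies_ex)
    then obtain tk where tk: "(case tk of (t, k) \<Rightarrow> t > (0::real) \<and> k \<in> K \<and> x = t *\<^sub>R k)"
      by blast
    obtain t k where "tk = (t, k)" by (cases tk)
    with tk have "t > 0" "k \<in> K" "x = t *\<^sub>R k" by auto
    then have "\<exists>k. x = t *\<^sub>R k \<and> k \<in> K \<and> t \<ge> 0" by auto
    from rP[OF xP this, of c] show ?thesis by blast
  qed
  define a where "a = (1/2) *\<^sub>R (u + st u)"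
  define b where "b = (-1/2) *\<^sub>R J (u - st u)"
  have stst: "st (st x) = x" for x using si unfolding star_involution_def by blast
  have "st a = a" unfolding a_def stscale stadd stst by (simp add: algebra_simps)
  then have "a \<in> selfadjoint st" unfolding selfadjoint_def by simp
  then have "a \<in> {p - q | p q. p \<in> P \<and> q \<in> P}" using Y by simp
  then obtain p q where pq: "p \<in> P" "q \<in> P" "a = p - q" by blast
  have "st b = b" unfolding b_def stscale stJ stdiff stst by (simp add: algebra_simps Jdiff)
  then have "b \<in> selfadjoint st" unfolding selfadjoint_def by simp
  then have "b \<in> {p - q | p q. p \<in> P \<and> q \<in> P}" using Y by simp
  then obtain p' q' where pq': "p' \<in> P" "q' \<in> P" "b = p' - q'" by blast
  have ueq: "u = a + J b" unfolding a_def b_def Jscale Jdiff cs(2) by (simp add: algebra_simps) (simp flip: scaleR_add_left)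
  have "u = cscale J 1 p + cscale J (-1) q + (cscale J \<i> p' + cscale J (-\<i>) q')"
    unfolding ueq pq pq' Jdiff by (simp add: cscale_def)
  moreover obtain s1 where r1: "repr J K (cscale J 1 p) s1" using rP'[OF pq(1)] by blast
  moreover obtain s2 where r2: "repr J K (cscale J (-1) q) s2" using rP'[OF pq(2)] by blast
  moreover obtain s3 where r3: "repr J K (cscale J \<i> p') s3" using rP'[OF pq'(1)] by blast
  moreover obtain s4 where r4: "repr J K (cscale J (-\<i>) q') s4" using rP'[OF pq'(2)] by blast
  ultimately show ?thesis using repr_add[OF repr_add[OF r1 r2] repr_add[OF r3 r4]] by auto
qed

lemma cb_le: "repr J K u s \<Longrightarrow> cbnorm J K u \<le> s"
  unfolding cbnorm_repr by (rule cInf_lower) (auto intro: bdd_belowI[where m=0] dest: repr_nonneg)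

lemma cb_lt:
  assumes "complex_base_norm_space J st P K" "cbnorm J K u < c"
  shows "\<exists>s. repr J K u s \<and> s < c"
proof -
  have "{s. repr J K u s} \<noteq> {}" using repr_all[OF assms(1)] by blast
  then show ?thesis using cInf_lessD[of "{s. repr J K u s}" c] assms(2) unfolding cbnorm_repr by blast
qed

theorem corollary3p1:
  fixes J st :: "'a::real_vector \<Rightarrow> 'a" and P K :: "'a set"
  assumes "complex_base_norm_space J st P K"
  shows "{u. cbnorm J K u \<le> 1} = cbn_closure J K (abs_convex_hull J K)"
proof
  have ach: "abs_convex_hull J K = {v. \<exists>s. repr J K v s \<and> s \<le> 1}"
    unfolding abs_convex_hull_def repr_def by blast
  show "{u. cbnorm J K u \<le> 1} \<subseteq> cbn_closure J K (abs_convex_hull J K)"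
  proof (clarsimp simp: cbn_closure_def ach)
    fix u and e :: real
    assume u: "cbnorm J K u \<le> 1" and e: "e > 0"
    obtain s where s: "repr J K u s" "s < 1 + e" using cb_lt[OF assms, of u "1+e"] u e by auto
    define m where "m = max 1 s"
    have m1: "m \<ge> 1" unfolding m_def by simp
    have "repr J K ((1/m) *\<^sub>R u) ((1/m) * s)" by (rule repr_scale[OF s(1)]) (use m1 in simp)
    moreover have "(1/m) * s \<le> 1" using m1 by (simp add: m_def field_simps)
    moreover have "repr J K (u - (1/m) *\<^sub>R u) ((1 - 1/m) * s)"
    proof -
      have "repr J K ((1 - 1/m) *\<^sub>R u) ((1 - 1/m) * s)" by (rule repr_scale[OF s(1)]) (use m1 in simp)
      moreover have "(1 - 1/m) *\<^sub>R u = u - (1/m) *\<^sub>R u" by (simp add: algebra_simps)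
      ultimately show ?thesis by simp
    qed
    moreover have "(1 - 1/m) * s < e"
    proof -
      have "(1 - 1/m) * s \<le> (1 - 1/m) * m"
        using m1 by (intro mult_left_mono) (auto simp: m_def field_simps)
      also have "\<dots> = m - 1" using m1 by (simp add: field_simps)
      also have "\<dots> < e" using s(2) e by (simp add: m_def)
      finally show ?thesis .
    qed
    ultimately show "\<exists>v. (\<exists>s. repr J K v s \<and> s \<le> 1) \<and> cbnorm J K (u - v) < e"
      by (meson cb_le le_less_trans)
  qed
  show "cbn_closure J K (abs_convex_hull J K) \<subseteq> {u. cbnorm J K u \<le> 1}"
  proof (clarsimp simp: cbn_closure_def ach)
    fix u
    assume h: "\<forall>e>0. \<exists>v. (\<exists>s. repr J K v s \<and> s \<le> 1) \<and> cbnorm J K (u - v) < e"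
    show "cbnorm J K u \<le> 1"
    proof (rule field_le_epsilon)
      fix e :: real assume e: "e > 0"
      obtain v s where v: "repr J K v s" "s \<le> 1" "cbnorm J K (u - v) < e" using h e by blast
      obtain t where t: "repr J K (u - v) t" "t < e" using cb_lt[OF assms v(3)] by blast
      have "repr J K u (s + t)" using repr_add[OF v(1) t(1)] by simp
      then have "cbnorm J K u \<le> s + t" by (rule cb_le)
      then show "cbnorm J K u \<le> 1 + e" using v t by linarith
    qed
  qed
qed

end
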